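(* Let $v=(v_l,v_h)$ be a valuation profile and let $\sigma=(\sigma_l,\sigma_h)$ be a Nash equilibrium of the winner-bid auction game $WB(v)$. Let $\{\sigma^\lambda\}_{\lambda\in\mathbb{N}}$ be a sequence of mixed-strategy profiles, each weakly payoff-monotone for $WB(v)$, such that $\sigma^\lambda\to\sigma$ as $\lambda\to\infty$. Let $$t(v)\equiv\max\{2c_h/3-c_l,\ ES(v)/3\}+1.$$ Then there exists $\Lambda\in\mathbb{N}$ such that for each $\lambda\geq\Lambda$: (1) if $v_l\geq v_h/3$, then $E_{\sigma^\lambda_l}(b)<c_l+1$; (2) $c_l-1<E_{\sigma^\lambda_h}(b)<c_l+t(v)$; (3) $\pi_l(\sigma^\lambda)<c_l+t(v)$ and $\pi_h(\sigma^\lambda)>c_h+(ES(v)-t(v))$; (4) if $\pi_l(\sigma)>c_l$, then $E_{\sigma^\lambda_l}(b)<E_{\sigma^\lambda_h}(b)$.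
   Context: Two agents $l,h$ jointly own an indivisible good. Agent $i\in\{l,h\}$ has valuation $v_i$; valuations are even nonnegative integers bounded by a maximum valuation $\overline{v}$, with $v_l<v_h$; write $v=(v_l,v_h)$. Agent $i$'s utility from receiving the object and paying $p$ to the other agent is $v_i-p$; from not receiving the object and receiving transfer $p$ it is $p$; agents are expected-utility maximizers. Net valuations are $c_i\equiv v_i/2$ (integers), and the equity surplus is $ES(v)\equiv c_h-c_l$. The bid set is $\mathcal{B}=\{0,1,\dots,\overline{p}\}$ with $\overline{p}$ an integer, $\overline{p}\geq\overline{v}/2$. For $\alpha\in[0,1]$, the $\alpha$-auction (with tie-breaker favoring $h$) is: each agent simultaneously chooses a bid in $\mathcal{B}$; the agent with the strictly higher bid receives the object, and in case of a tie agent $h$ receives the object; the agent receiving the object pays $\alpha\cdot(\text{winner's bid})+(1-\alpha)\cdot(\text{loser's bid})$ to the other agent. The winner-bid auction $WB$ is $\alpha=1$; $WB(v)$ denotes the induced complete-information game with valuations $v$. A mixed strategy of agent $i$ is $\sigma_i\in\Delta(\mathcal{B})$; $E_{\sigma_i}(b)=\sum_{b\in\mathcal{B}}\sigma_i(b)\,b$ is agent $i$'s expected bid; $\pi_i(\sigma)$ is agent $i$'s expected utility under the profile $\sigma=(\sigma_l,\sigma_h)$. A Nash equilibrium is a profile in which each agent's strategy puts positive probability only on bids maximizing her expected utility given the other agent's strategy. A profile $\sigma$ is weakly payoff-monotone for the game if for each agent $i$ and each pair of bids $b,d\in\mathcal{B}$, $\sigma_i(b)>\sigma_i(d)$ implies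 that the expected utility of bid $b$ for agent $i$ against $\sigma_{-i}$ is strictly greater than that of bid $d$. Convergence $\sigma^\lambda\to\sigma$ is pointwise convergence of the probability vectors. *)

theory Defs
  imports Complex_Main
begin

datatype agent = L | H

fun other :: "agent \<Rightarrow> agent" where
  "other L = H" | "other H = L"

fun val :: "nat \<times> nat \<Rightarrow> agent \<Rightarrow> real" where
  "val (vl, vh) L = real vl" | "val (vl, vh) H = real vh"

definition auction_util :: "real \<Rightarrow> nat \<times> nat \<Rightarrow> agent \<Rightarrow> nat \<Rightarrow> nat \<Rightarrow> real" where
  "auction_util \<alpha> v i b d =
     (let bl = (if i = L then b else d); bh = (if i = L then d else b);
          pay = (if bl \<le> bh then \<alpha> * real bh + (1 - \<alpha>) * real bl
                 else \<alpha> * real bl + (1 - \<alpha>) * real bh);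
          winner = (if bl \<le> bh then H else L)
      in if i = winner then val v i - pay else pay)"

definition mixed :: "nat \<Rightarrow> (nat \<Rightarrow> real) \<Rightarrow> bool" where
  "mixed pbar s \<longleftrightarrow> (\<forall>b. 0 \<le> s b) \<and> (\<forall>b>pbar. s b = 0) \<and> (\<Sum>b\<in>{0..pbar}. s b) = 1"

type_synonym profile = "agent \<Rightarrow> nat \<Rightarrow> real"

definition mixed_profile :: "nat \<Rightarrow> profile \<Rightarrow> bool" where
  "mixed_profile pbar \<sigma> \<longleftrightarrow> mixed pbar (\<sigma> L) \<and> mixed pbar (\<sigma> H)"

definition bid_util :: "real \<Rightarrow> nat \<Rightarrow> nat \<times> nat \<Rightarrow> agent \<Rightarrow> nat \<Rightarrow> (nat \<Rightarrow> real) \<Rightarrow> real" where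
  "bid_util \<alpha> pbar v i b s = (\<Sum>d\<in>{0..pbar}. s d * auction_util \<alpha> v i b d)"

definition payoff :: "real \<Rightarrow> nat \<Rightarrow> nat \<times> nat \<Rightarrow> profile \<Rightarrow> agent \<Rightarrow> real" where
  "payoff \<alpha> pbar v \<sigma> i = (\<Sum>b\<in>{0..pbar}. \<sigma> i b * bid_util \<alpha> pbar v i b (\<sigma> (other i)))"

definition exp_bid :: "nat \<Rightarrow> (nat \<Rightarrow> real) \<Rightarrow> real" where
  "exp_bid pbar s = (\<Sum>b\<in>{0..pbar}. s b * real b)"

definition nash :: "real \<Rightarrow> nat \<Rightarrow> nat \<times> nat \<Rightarrow> profile \<Rightarrow> bool" where
  "nash \<alpha> pbar v \<sigma> \<longleftrightarrow> mixed_profile pbar \<sigma> \<and>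
     (\<forall>i. \<forall>b\<in>{0..pbar}. \<sigma> i b > 0 \<longrightarrow>
        (\<forall>d\<in>{0..pbar}. bid_util \<alpha> pbar v i d (\<sigma> (other i)) \<le> bid_util \<alpha> pbar v i b (\<sigma> (other i))))"

definition weakly_payoff_monotone :: "real \<Rightarrow> nat \<Rightarrow> nat \<times> nat \<Rightarrow> profile \<Rightarrow> bool" where
  "weakly_payoff_monotone \<alpha> pbar v \<sigma> \<longleftrightarrow>
     (\<forall>i. \<forall>b\<in>{0..pbar}. \<forall>d\<in>{0..pbar}. \<sigma> i b > \<sigma> i d \<longrightarrow>
        bid_util \<alpha> pbar v i b (\<sigma> (other i)) > bid_util \<alpha> pbar v i d (\<sigma> (other i)))"

definition WB_alpha :: real where "WB_alpha = 1"

end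

theory Submission
  imports Defs
begin

lemma uL: "auction_util WB_alpha (vl, vh) L b d = (if b \<le> d then real d else real vl - real b)"
  by (simp add: auction_util_def WB_alpha_def Let_def)

lemma uH: "auction_util WB_alpha (vl, vh) H b d = (if d \<le> b then real vh - real b else real d)"
  by (auto simp add: auction_util_def WB_alpha_def Let_def)

lemma bid_util_diff:
  "bid_util a pbar v i b s - bid_util a pbar v i d s = (\<Sum>x\<in>{0..pbar}. s x * (auction_util a v i b x - auction_util a v i d x))"
  by (simp add: bid_util_def sum_subtractf[symmetric] algebra_simps)

lemma wpm_D:
  assumes "weakly_payoff_monotone a pbar v \<tau>" "b \<le> pbar" "d \<le> pbar"
    "bid_util a pbar v i b (\<tau> (other i)) \<le> bid_util a pbar v i d (\<tau> (other i))"
  shows "\<tau> i b \<le> \<tau> i d"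
  using assms unfolding weakly_payoff_monotone_def by (meson atLeastAtMost_iff le0 not_le)

lemma gen_L:
  assumes wpm: "weakly_payoff_monotone WB_alpha pbar (vl, vh) \<tau>"
    and nn: "\<And>x. 0 \<le> \<tau> H x" and db: "d < b" "b \<le> pbar" "vl \<le> d + b"
  shows "\<tau> L b \<le> \<tau> L d"
proof (rule wpm_D[OF wpm db(2)])
  show "d \<le> pbar" using db by simp
  have "bid_util WB_alpha pbar (vl, vh) L b (\<tau> H) - bid_util WB_alpha pbar (vl, vh) L d (\<tau> H) \<le> 0"
    unfolding bid_util_diff uL
    by (rule sum_nonpos) (use nn db in \<open>auto intro!: mult_nonneg_nonpos\<close>)
  then show "bid_util WB_alpha pbar (vl, vh) L b (\<tau> (other L)) \<le> bid_util WB_alpha pbar (vl, vh) L d (\<tau> (other L))"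
    by simp
qed

lemma uH_diff_step:
  assumes "1 \<le> B"
  shows "auction_util WB_alpha (vl, vh) H B x - auction_util WB_alpha (vl, vh) H (B-1) x
    = (if x < B then -1 else if x = B then real vh - 2 * real B else 0)"
  using assms by (auto simp: uH of_nat_diff)

lemma sum_lt_filter:
  fixes f :: "nat \<Rightarrow> real"
  assumes "B \<le> Suc pbar"
  shows "(\<Sum>x\<in>{0..pbar}. if x < B then f x else 0) = (\<Sum>x\<in>{0..<B}. f x)"
proof -
  have "(\<Sum>x\<in>{0..pbar}. if x < B then f x else 0) = (\<Sum>x\<in>{x\<in>{0..pbar}. x < B}. f x)"
    by (rule sum.inter_filter[symmetric]) simp
  also have "{x\<in>{0..pbar}. x < B} = {0..<B}" using assms by auto
  finally show ?thesis .
qed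

lemma sum_interval_filter:
  fixes f :: "nat \<Rightarrow> real"
  assumes "b \<le> pbar"
  shows "(\<Sum>x\<in>{0..pbar}. if a \<le> x \<and> x \<le> b then f x else 0) = (\<Sum>x\<in>{a..b}. f x)"
proof -
  have "(\<Sum>x\<in>{0..pbar}. if a \<le> x \<and> x \<le> b then f x else 0) = (\<Sum>x\<in>{x\<in>{0..pbar}. a \<le> x \<and> x \<le> b}. f x)"
    by (rule sum.inter_filter[symmetric]) simp
  also have "{x\<in>{0..pbar}. a \<le> x \<and> x \<le> b} = {a..b}" using assms by auto
  finally show ?thesis .
qed

lemma sum_single_filter:
  fixes f :: "nat \<Rightarrow> real"
  assumes "B \<le> pbar"
  shows "(\<Sum>x\<in>{0..pbar}. if x = B then f x else 0) = f B"
  using assms by (simp add: sum.delta')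

lemma step2:
  assumes wpm: "weakly_payoff_monotone WB_alpha pbar (vl, vh) \<tau>"
    and B: "1 \<le> B" "B \<le> pbar" and qB: "\<tau> H (B-1) < \<tau> H B"
  shows "(\<Sum>y\<in>{0..<B}. \<tau> L y) < \<tau> L B * (real vh - 2 * real B)"
proof -
  have "bid_util WB_alpha pbar (vl, vh) H (B-1) (\<tau> (other H)) < bid_util WB_alpha pbar (vl, vh) H B (\<tau> (other H))"
  proof -
    have "\<forall>b\<in>{0..pbar}. \<forall>d\<in>{0..pbar}. \<tau> H d < \<tau> H b \<longrightarrow>
        bid_util WB_alpha pbar (vl, vh) H d (\<tau> (other H)) < bid_util WB_alpha pbar (vl, vh) H b (\<tau> (other H))"
      using wpm unfolding weakly_payoff_monotone_def by blast
    then show ?thesis using qB B by auto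
  qed
  then have "0 < bid_util WB_alpha pbar (vl, vh) H B (\<tau> L) - bid_util WB_alpha pbar (vl, vh) H (B-1) (\<tau> L)"
    by simp
  also have "\<dots> = (\<Sum>x\<in>{0..pbar}. \<tau> L x * (if x < B then -1 else if x = B then real vh - 2 * real B else 0))"
    unfolding bid_util_diff uH_diff_step[OF B(1)] ..
  also have "\<dots> = (\<Sum>x\<in>{0..pbar}. (if x < B then - \<tau> L x else 0) + (if x = B then \<tau> L x * (real vh - 2 * real B) else 0))"
    by (rule sum.cong) auto
  also have "\<dots> = - (\<Sum>y\<in>{0..<B}. \<tau> L y) + \<tau> L B * (real vh - 2 * real B)"
    using B by (simp add: sum.distrib sum_lt_filter sum_single_filter sum_negf)
  finally show ?thesis by simp
qed

lemma sum_reflect: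
  fixes f :: "nat \<Rightarrow> real"
  assumes "d \<le> s"
  shows "(\<Sum>x\<in>{s..2*s-d}. f x) = (\<Sum>y\<in>{d..s}. f (2*s - y))"
  by (rule sum.reindex_bij_witness[of _ "\<lambda>x. 2*s - x" "\<lambda>x. 2*s - x"]) (use assms in auto)

lemma sum_id_interval:
  "(\<Sum>x\<in>{s..s+j}. real x) = (real j + 1) * real s + real j * (real j + 1) / 2"
  by (induction j) (auto simp: algebra_simps)

lemma wpm_strict:
  assumes "weakly_payoff_monotone a pbar v \<tau>" "b \<le> pbar" "d \<le> pbar" "\<tau> i d < \<tau> i b"
  shows "bid_util a pbar v i d (\<tau> (other i)) < bid_util a pbar v i b (\<tau> (other i))"
  using assms unfolding weakly_payoff_monotone_def by auto

lemma sum_reflect2: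
  fixes f :: "nat \<Rightarrow> real"
  assumes "d \<le> s"
  shows "(\<Sum>x\<in>{d..2*s-d}. f x) = (\<Sum>x\<in>{d..2*s-d}. f (2*s - x))"
  by (rule sum.reindex_bij_witness[of _ "\<lambda>x. 2*s - x" "\<lambda>x. 2*s - x"]) (use assms in auto)

lemma nl: "\<lbrakk>1 \<le> (j::real); j \<le> 2*k - 1; 1 \<le> k; ch - cl \<le> 3*k - 3\<rbrakk> \<Longrightarrow>
  2*j*(2*ch - 2*(cl+k) - 2*k) + ((j+1)*(cl-k) + j*(j+1)/2 + (j+1)*((cl - k + j) - 2*ch)) \<le> 0"
proof -
  assume a: "1 \<le> j" "j \<le> 2*k - 1" "1 \<le> k" "ch - cl \<le> 3*k - 3"
  define P1 where "P1 = (3*k - 3 - (ch - cl)) * (j - 1)"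
  define P2 where "P2 = j * (2*k - 1 - j)"
  define P3 where "P3 = j * k"
  have f1: "0 \<le> P1" using a by (simp add: P1_def)
  have f2: "0 \<le> P2" using a by (simp add: P2_def)
  have f3: "0 \<le> P3" using a by (simp add: P3_def)
  have e: "2*j*(2*ch - 2*(cl+k) - 2*k) + ((j+1)*(cl-k) + j*(j+1)/2 + (j+1)*((cl - k + j) - 2*ch))
     = - P3 - 6*j - 8*k + 6 - 2*P1 - 3/2*P2"
    unfolding P1_def P2_def P3_def by (simp add: algebra_simps field_simps)
  show ?thesis unfolding e using f1 f2 f3 a by linarith
qed

lemma spl:
  fixes vl vh pbar B cl ch :: nat and \<tau> :: profile
  assumes vl: "vl = 2*cl" and vh: "vh = 2*ch"
    and mp: "mixed_profile pbar \<tau>" and wpm: "weakly_payoff_monotone WB_alpha pbar (vl, vh) \<tau>"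
    and B: "cl < B" "B \<le> pbar" and qB: "\<tau> H (B-1) < \<tau> H B" and pB: "0 < \<tau> L B"
  shows "real B < real cl + max (2*real ch/3 - real cl) ((real ch - real cl)/3) + 1"
proof (rule ccontr)
  assume "\<not> ?thesis"
  then have A1: "real B \<ge> 2*real ch/3 + 1" and A2: "real B - cl \<ge> (real ch - cl)/3 + 1" by auto
  define p where "p = \<tau> L"
  define q where "q = \<tau> H"
  define m where "m = p B"
  have pnn: "\<And>x. 0 \<le> p x" and qnn: "\<And>x. 0 \<le> q x"
    using mp unfolding mixed_profile_def mixed_def p_def q_def by auto
  have mpos: "0 < m" using pB by (simp add: m_def p_def)
  define k where "k = B - cl"
  have Bk: "B = cl + k" and k1: "1 \<le> k" using B by (auto simp: k_def)
  define G where "G = (\<Sum>y\<in>{0..<B}. p y)"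
  have G: "G < m * (real vh - 2 * real B)"
    using step2[OF wpm _ B(2) qB] B unfolding G_def m_def p_def by simp
  have Gnn: "0 \<le> G" unfolding G_def by (rule sum_nonneg) (simp add: pnn)
  have vhB: "2 * real B < real vh"
  proof -
    have "0 < m * (real vh - 2 * real B)" using G Gnn by linarith
    then show ?thesis using mpos by (simp add: zero_less_mult_iff)
  qed
  define s where "s = vl - B"
  have step1: "m \<le> p d" if "s \<le> d" "d \<le> B" for d
  proof (cases "d = B")
    case True then show ?thesis by (simp add: m_def)
  next
    case False
    then have "d < B" using that by simp
    have "vl \<le> d + B" using that by (simp add: s_def)
    moreover have "\<And>x. 0 \<le> \<tau> H x" using mp by (auto simp: mixed_profile_def mixed_def)
    ultimately show ?thesis unfolding m_def p_def using gen_L[OF wpm _ \<open>d < B\<close> B(2)] by blast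
  qed
  define lo where "lo = (s + 1) - 2*k"
  have step4: "q e \<le> q (2*s - e)" if le: "lo \<le> e" "e < s" for e
  proof (rule ccontr)
    assume "\<not> q e \<le> q (2*s - e)"
    hence qlt: "q (2*s - e) < q e" by simp
    have vlB: "B < vl" using le by (simp add: s_def)
    have sk: "s = cl - k" "k < cl" using vlB by (auto simp: s_def vl Bk)
    have lo2: "s + 1 \<le> e + 2*k" using le(1) by (simp add: lo_def)
    define j where "j = s - e"
    define e' where "e' = s + j"
    have e'eq: "2*s - e = e'" using le by (simp add: e'_def j_def)
    have j1: "1 \<le> j" "j + 1 \<le> 2*k" using le lo2 by (auto simp: j_def)
    have e'B: "e' < B" using j1 sk Bk by (simp add: e'_def)
    have ee': "e < e'" "e \<le> pbar" "e' \<le> pbar" using le e'B B by (auto simp: e'_def j_def)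
    have strict: "bid_util WB_alpha pbar (vl, vh) H e' (\<tau> L) < bid_util WB_alpha pbar (vl, vh) H e (\<tau> L)"
      using wpm_strict[OF wpm ee'(2) ee'(3), of H] qlt e'eq by (simp add: q_def)
    have diff: "bid_util WB_alpha pbar (vl, vh) H e (\<tau> L) - bid_util WB_alpha pbar (vl, vh) H e' (\<tau> L)
        = (\<Sum>x\<in>{0..pbar}. p x * (if x \<le> e then real e' - real e else if x \<le> e' then real x + real e' - real vh else 0))"
      unfolding bid_util_diff uH p_def by (rule sum.cong) (use ee' in auto)
    have bound: "(\<Sum>x\<in>{0..pbar}. p x * (if x \<le> e then real e' - real e else if x \<le> e' then real x + real e' - real vh else 0))
       \<le> (\<Sum>x\<in>{0..pbar}. (if 0 \<le> x \<and> x \<le> e then p x * (real e' - real e) else 0)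
             + (if s \<le> x \<and> x \<le> e' then m * (real x + real e' - real vh) else 0))"
    proof (rule sum_mono)
      fix x assume "x \<in> {0..pbar}"
      consider "x \<le> e" | "e < x" "x < s" | "s \<le> x" "x \<le> e'" | "e' < x" by linarith
      then show "p x * (if x \<le> e then real e' - real e else if x \<le> e' then real x + real e' - real vh else 0)
         \<le> (if 0 \<le> x \<and> x \<le> e then p x * (real e' - real e) else 0)
             + (if s \<le> x \<and> x \<le> e' then m * (real x + real e' - real vh) else 0)"
      proof cases
        case 1 then show ?thesis using le by auto
      next
        case 2
        have "x < B" using 2 sk Bk by simp
        then have "real x < real B" "real e' < real B" using e'B by auto
        then have "real x + real e' - real vh \<le> 0" using vhB by linarith
        then have "p x * (real x + real e' - real vh) \<le> 0" using pnn[of x] by (simp add: mult_nonneg_nonpos)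
        then show ?thesis using 2 ee' by auto
      next
        case 3
        have "x < B" using 3 e'B by simp
        then have "real x < real B" "real e' < real B" using e'B by auto
        then have c: "real x + real e' - real vh \<le> 0" using vhB by linarith
        have "m \<le> p x" using step1[of x] 3 e'B by simp
        then have "p x * (real x + real e' - real vh) \<le> m * (real x + real e' - real vh)"
          using c by (simp add: mult_right_mono_neg)
        then show ?thesis using 3 ee' le by auto
      next
        case 4 then show ?thesis using ee' le by auto
      qed
    qed
    define F where "F = (\<Sum>x\<in>{0..e}. p x)"
    define W where "W = (\<Sum>x\<in>{s..e'}. real x + real e' - real vh)"
    have rhs: "(\<Sum>x\<in>{0..pbar}. (if 0 \<le> x \<and> x \<le> e then p x * (real e' - real e) else 0)
             + (if s \<le> x \<and> x \<le> e' then m * (real x + real e' - real vh) else 0))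
          = (real e' - real e) * F + m * W"
      unfolding sum.distrib sum_interval_filter[OF ee'(2)] sum_interval_filter[OF ee'(3)]
      by (simp add: F_def W_def sum_distrib_left sum_distrib_right mult.commute)
    have Wv: "W = (real j + 1) * real s + real j * (real j + 1) / 2 + (real j + 1) * (real e' - real vh)"
    proof -
      have "W = (\<Sum>x\<in>{s..s+j}. real x + (real e' - real vh))"
        unfolding W_def e'_def by (rule sum.cong) auto
      also have "\<dots> = (\<Sum>x\<in>{s..s+j}. real x) + (\<Sum>x\<in>{s..s+j}. real e' - real vh)"
        by (rule sum.distrib)
      also have "\<dots> = ((real j + 1) * real s + real j * (real j + 1) / 2) + (real j + 1) * (real e' - real vh)"
        unfolding sum_id_interval by simp
      finally show ?thesis by simp
    qed
    have Fb: "F + (\<Sum>x\<in>{s..<B}. p x) \<le> G"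
    proof -
      have "F + (\<Sum>x\<in>{s..<B}. p x) = (\<Sum>x\<in>{0..e} \<union> {s..<B}. p x)"
        unfolding F_def by (rule sum.union_disjoint[symmetric]) (use le in auto)
      also have "\<dots> \<le> G" unfolding G_def
        by (rule sum_mono2) (use le e'B sk Bk in \<open>auto simp: pnn\<close>)
      finally show ?thesis .
    qed
    have blk: "real (B - s) * m \<le> (\<Sum>x\<in>{s..<B}. p x)"
    proof -
      have "(\<Sum>x\<in>{s..<B}. m) \<le> (\<Sum>x\<in>{s..<B}. p x)"
        by (rule sum_mono) (use step1 in auto)
      then show ?thesis by simp
    qed
    have Bs: "B - s = 2*k" using sk Bk by simp
    have F2: "F < m * (real vh - 2 * real B) - 2 * real k * m"
      using Fb blk G Bs by simp
    have Jpos: "0 < real e' - real e" using ee' by simp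
    have "0 < (real e' - real e) * F + m * W" using strict diff bound rhs by linarith
    also have "\<dots> \<le> (real e' - real e) * (m * (real vh - 2 * real B) - 2 * real k * m) + m * W"
      using F2 Jpos by simp
    finally have "0 < m * ((real e' - real e) * (real vh - 2 * real B - 2 * real k) + W)"
      by (simp add: algebra_simps)
    then have pos: "0 < (real e' - real e) * (real vh - 2 * real B - 2 * real k) + W"
      using mpos by (simp add: zero_less_mult_iff)
    have rs: "real s = real cl - real k" using sk by (simp add: of_nat_diff)
    have re: "real e' - real e = 2 * real j" "real e' = real cl - real k + real j"
      using le rs by (auto simp: e'_def j_def of_nat_diff)
    have nlr: "2*real j*(2*real ch - 2*(real cl+real k) - 2*real k) + ((real j+1)*(real cl-real k) + real j*(real j+1)/2 + (real j+1)*((real cl - real k + real j) - 2*real ch)) \<le> 0"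
    proof (rule nl)
      show "1 \<le> real j" using j1 by simp
      show "real j \<le> 2 * real k - 1" using j1 by linarith
      show "1 \<le> real k" using k1 by simp
      show "real ch - real cl \<le> 3 * real k - 3" using A2 Bk by (simp add: field_simps)
    qed
    show False using pos nlr re Wv rs vh Bk by (simp add: algebra_simps)
  qed
  have step5: "m \<le> p d" if le: "lo \<le> d" "d < s" for d
  proof -
    have vlB: "B < vl" using le by (simp add: s_def)
    have sk: "s = cl - k" "k < cl" using vlB by (auto simp: s_def vl Bk)
    have lo2: "s + 1 \<le> d + 2*k" using le(1) by (simp add: lo_def)
    have dB: "2*s - d < B" "d \<le> pbar" "2*s - d \<le> pbar" using lo2 sk Bk B le by auto
    have rs: "real s = real vl - real B" using vlB by (simp add: s_def of_nat_diff)
    define f where "f x = q x * (real s - real x)" for x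
    have "bid_util WB_alpha pbar (vl, vh) L B (\<tau> H) - bid_util WB_alpha pbar (vl, vh) L d (\<tau> H)
        = (\<Sum>x\<in>{0..pbar}. q x * (if B \<le> x then 0 else if d \<le> x then real s - real x else real d - real B))"
      unfolding bid_util_diff uL q_def by (rule sum.cong) (use le rs sk Bk in auto)
    also have "\<dots> \<le> (\<Sum>x\<in>{0..pbar}. if d \<le> x \<and> x \<le> 2*s - d then f x else 0)"
    proof (rule sum_mono)
      fix x assume "x \<in> {0..pbar}"
      consider "B \<le> x" | "d \<le> x" "x \<le> 2*s - d" | "2*s - d < x" "x < B" | "x < d" by linarith
      then show "q x * (if B \<le> x then 0 else if d \<le> x then real s - real x else real d - real B)
          \<le> (if d \<le> x \<and> x \<le> 2*s - d then f x else 0)"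
      proof cases
        case 1 then show ?thesis using dB by auto
      next
        case 2 then show ?thesis using dB by (auto simp: f_def)
      next
        case 3
        then have "s < x" using le by auto
        then have "real s - real x \<le> 0" by simp
        then have "q x * (real s - real x) \<le> 0" using qnn[of x] by (simp add: mult_nonneg_nonpos)
        then show ?thesis using 3 le by auto
      next
        case 4
        have "real d - real B \<le> 0" using le dB by simp
        then have "q x * (real d - real B) \<le> 0" using qnn[of x] by (simp add: mult_nonneg_nonpos)
        then show ?thesis using 4 le dB by auto
      qed
    qed
    also have "\<dots> = (\<Sum>x\<in>{d..2*s-d}. f x)" by (rule sum_interval_filter[OF dB(3)])
    also have "\<dots> \<le> 0"
    proof -
      have r: "(\<Sum>x\<in>{d..2*s-d}. f x) = (\<Sum>x\<in>{d..2*s-d}. f (2*s - x))"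
        by (rule sum_reflect2) (use le in simp)
      have "(\<Sum>x\<in>{d..2*s-d}. f x + f (2*s - x)) \<le> 0"
      proof (rule sum_nonpos)
        fix x assume x: "x \<in> {d..2*s-d}"
        have rx: "real (2*s - x) = 2 * real s - real x" using x by (auto simp: of_nat_diff)
        have fx: "f x + f (2*s - x) = (q x - q (2*s - x)) * (real s - real x)"
          unfolding f_def rx by (simp add: algebra_simps)
        consider "x < s" | "x = s" | "s < x" by linarith
        then show "f x + f (2*s - x) \<le> 0"
        proof cases
          case 1
          then have "q x \<le> q (2*s - x)" using step4[of x] x le by auto
          then show ?thesis unfolding fx using 1 by (simp add: mult_nonpos_nonneg)
        next
          case 2 then show ?thesis unfolding fx by simp
        next
          case 3
          have y: "lo \<le> 2*s - x" "2*s - x < s" using x 3 le by auto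
          have "q (2*s - x) \<le> q (2*s - (2*s - x))" using step4[OF y] .
          also have "2*s - (2*s - x) = x" using x by auto
          finally have "0 \<le> q x - q (2*s - x)" by simp
          moreover have "real s - real x \<le> 0" using 3 by simp
          ultimately show ?thesis unfolding fx by (simp add: mult_nonneg_nonpos)
        qed
      qed
      then have "(\<Sum>x\<in>{d..2*s-d}. f x) + (\<Sum>x\<in>{d..2*s-d}. f (2*s - x)) \<le> 0"
        by (simp add: sum.distrib)
      then show ?thesis using r by simp
    qed
    finally have "bid_util WB_alpha pbar (vl, vh) L B (\<tau> (other L)) \<le> bid_util WB_alpha pbar (vl, vh) L d (\<tau> (other L))"
      by simp
    from wpm_D[OF wpm B(2) dB(2) this] show ?thesis by (simp add: m_def p_def)
  qed
  have all: "m \<le> p d" if "lo \<le> d" "d \<le> B" for d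
    using step1 step5 that by (cases "d < s") auto
  have "(\<Sum>y\<in>{lo..<B}. m) \<le> (\<Sum>y\<in>{lo..<B}. p y)"
    by (rule sum_mono) (use all in auto)
  also have "\<dots> \<le> G" unfolding G_def
    by (rule sum_mono2) (auto simp: pnn)
  finally have "real (B - lo) * m < m * (real vh - 2 * real B)" using G by simp
  then have cnt: "real (B - lo) < real vh - 2 * real B" using mpos by simp
  show False
  proof (cases "s + 1 \<le> 2*k")
    case True
    then have "lo = 0" by (simp add: lo_def)
    then show False using cnt A1 vh by simp
  next
    case False
    then have "lo = s + 1 - 2*k" "s = cl - k" "k < cl" using B by (auto simp: lo_def s_def vl Bk)
    then have "B - lo = 4*k - 1" using False Bk by auto
    then have "real (B - lo) = 4 * real k - 1" using k1 by (simp add: of_nat_diff)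
    moreover have "real B = real cl + real k" "real vh = 2 * real ch" using Bk vh by auto
    moreover have "real ch - real cl \<le> 3 * real k - 3" using A2 Bk by (simp add: field_simps)
    ultimately show False using cnt by linarith
  qed
qed

lemma nash_D:
  assumes "nash a pbar v \<sigma>" "0 < \<sigma> i b" "b \<le> pbar" "d \<le> pbar"
  shows "bid_util a pbar v i d (\<sigma> (other i)) \<le> bid_util a pbar v i b (\<sigma> (other i))"
  using assms unfolding nash_def by auto

lemma mixed_facts:
  assumes "mixed pbar s"
  shows "\<And>x. 0 \<le> s x" "\<And>x. pbar < x \<Longrightarrow> s x = 0" "(\<Sum>x\<in>{0..pbar}. s x) = 1"
  using assms unfolding mixed_def by auto

lemma sum_const_weight:
  fixes s :: "nat \<Rightarrow> real"
  assumes "(\<Sum>x\<in>{0..pbar}. s x) = 1"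
  shows "(\<Sum>x\<in>{0..pbar}. s x * c) = c"
  using assms by (simp add: sum_distrib_right[symmetric])

lemma sum_ge_weight:
  fixes s f :: "nat \<Rightarrow> real"
  assumes "(\<Sum>x\<in>{0..pbar}. s x) = 1" "\<And>x. x \<le> pbar \<Longrightarrow> s x * c \<le> s x * f x"
  shows "c \<le> (\<Sum>x\<in>{0..pbar}. s x * f x)"
proof -
  have "(\<Sum>x\<in>{0..pbar}. s x * c) \<le> (\<Sum>x\<in>{0..pbar}. s x * f x)"
    by (rule sum_mono) (use assms(2) in auto)
  then show ?thesis using sum_const_weight[OF assms(1)] by simp
qed

lemma bid_util_H_top:
  assumes "mixed pbar p" "\<And>y. B < y \<Longrightarrow> p y = 0"
  shows "bid_util WB_alpha pbar (vl, vh) H B p = real vh - real B"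
proof -
  have "bid_util WB_alpha pbar (vl, vh) H B p = (\<Sum>y\<in>{0..pbar}. p y * (real vh - real B))"
    unfolding bid_util_def uH by (rule sum.cong) (use assms(2) in \<open>auto simp: not_le\<close>)
  then show ?thesis using sum_const_weight mixed_facts(3)[OF assms(1)] by simp
qed

lemma q_high_zero:
  assumes ne: "nash WB_alpha pbar (vl, vh) \<sigma>" and mp: "mixed_profile pbar \<sigma>"
    and ptop: "\<And>y. B < y \<Longrightarrow> \<sigma> L y = 0" and B: "B \<le> pbar" and x: "B < x"
  shows "\<sigma> H x = 0"
proof (rule ccontr)
  assume nz: "\<sigma> H x \<noteq> 0"
  have mL: "mixed pbar (\<sigma> L)" and mH: "mixed pbar (\<sigma> H)" using mp by (auto simp: mixed_profile_def)
  have xp: "x \<le> pbar" using nz mixed_facts(2)[OF mH] by (meson not_le)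
  have pos: "0 < \<sigma> H x" using nz mixed_facts(1)[OF mH, of x] by simp
  have "bid_util WB_alpha pbar (vl, vh) H B (\<sigma> L) \<le> bid_util WB_alpha pbar (vl, vh) H x (\<sigma> L)"
    using nash_D[OF ne pos xp B] by simp
  moreover have "bid_util WB_alpha pbar (vl, vh) H x (\<sigma> L) - bid_util WB_alpha pbar (vl, vh) H B (\<sigma> L)
      = (\<Sum>y\<in>{0..pbar}. \<sigma> L y * (real B - real x))"
    unfolding bid_util_diff uH by (rule sum.cong) (use x ptop in \<open>auto simp: not_le\<close>)
  moreover have "(\<Sum>y\<in>{0..pbar}. \<sigma> L y * (real B - real x)) = real B - real x"
    using sum_const_weight mixed_facts(3)[OF mL] by simp
  ultimately show False using x by simp
qed

lemma payoff_sum: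
  fixes p q :: "nat \<Rightarrow> real"
  assumes mL: "mixed pbar p" and mH: "mixed pbar q"
  shows "payoff WB_alpha pbar (vl, vh) (\<lambda>i. if i = L then p else q) L + payoff WB_alpha pbar (vl, vh) (\<lambda>i. if i = L then p else q) H
    = real vh - (real vh - real vl) * (\<Sum>b\<in>{0..pbar}. \<Sum>x\<in>{0..pbar}. p b * q x * (if x < b then 1 else 0))"
proof -
  have PL: "payoff WB_alpha pbar (vl, vh) (\<lambda>i. if i = L then p else q) L = (\<Sum>b\<in>{0..pbar}. \<Sum>x\<in>{0..pbar}. p b * q x * (if b \<le> x then real x else real vl - real b))"
    unfolding payoff_def bid_util_def uL by (simp add: sum_distrib_left mult.assoc)
  have PH: "payoff WB_alpha pbar (vl, vh) (\<lambda>i. if i = L then p else q) H = (\<Sum>b\<in>{0..pbar}. \<Sum>x\<in>{0..pbar}. p b * q x * (if b \<le> x then real vh - real x else real b))"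
    unfolding payoff_def bid_util_def uH
    by (subst sum.swap) (simp add: sum_distrib_left mult.assoc mult.left_commute)
  have "payoff WB_alpha pbar (vl, vh) (\<lambda>i. if i = L then p else q) L + payoff WB_alpha pbar (vl, vh) (\<lambda>i. if i = L then p else q) H
     = (\<Sum>b\<in>{0..pbar}. \<Sum>x\<in>{0..pbar}. p b * q x * real vh - (real vh - real vl) * (p b * q x * (if x < b then 1 else 0)))"
    unfolding PL PH sum.distrib[symmetric] by (rule sum.cong, simp, rule sum.cong) (auto simp: algebra_simps)
  also have "\<dots> = (\<Sum>b\<in>{0..pbar}. \<Sum>x\<in>{0..pbar}. p b * q x * real vh) - (real vh - real vl) * (\<Sum>b\<in>{0..pbar}. \<Sum>x\<in>{0..pbar}. p b * q x * (if x < b then 1 else 0))"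
    by (simp add: sum_subtractf sum_distrib_left)
  also have "(\<Sum>b\<in>{0..pbar}. \<Sum>x\<in>{0..pbar}. p b * q x * real vh) = real vh"
    using mixed_facts(3)[OF mL] mixed_facts(3)[OF mH]
    by (simp add: sum_distrib_left[symmetric] sum_distrib_right[symmetric] mult.assoc)
  finally show ?thesis .
qed

lemma profile_eta: "(\<lambda>i. if i = L then \<sigma> L else \<sigma> H) = (\<sigma> :: profile)"
  by (rule ext) (case_tac i, auto)

lemma limit_structure:
  fixes vl vh pbar cl ch :: nat and \<sigma> :: profile
  assumes vl: "vl = 2*cl" and vh: "vh = 2*ch" and clch: "cl < ch" and chp: "ch \<le> pbar"
    and ne: "nash WB_alpha pbar (vl, vh) \<sigma>"
    and limL: "\<And>d b. d < b \<Longrightarrow> b \<le> pbar \<Longrightarrow> vl \<le> d + b \<Longrightarrow> \<sigma> L b \<le> \<sigma> L d"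
  shows "\<exists>B. B \<le> pbar \<and> cl \<le> B \<and> 0 < \<sigma> L B \<and> (\<forall>b>B. \<sigma> L b = 0) \<and> \<sigma> H B = 1
      \<and> (\<forall>e. e \<noteq> B \<longrightarrow> \<sigma> H e = 0) \<and> (cl < B \<longrightarrow> 0 < \<sigma> L (B-1))"
proof -
  have mp: "mixed_profile pbar \<sigma>" using ne by (simp add: nash_def)
  have mL: "mixed pbar (\<sigma> L)" and mH: "mixed pbar (\<sigma> H)" using mp by (auto simp: mixed_profile_def)
  note pnn = mixed_facts(1)[OF mL] and qnn = mixed_facts(1)[OF mH]
  note pz = mixed_facts(2)[OF mL] and qz = mixed_facts(2)[OF mH]
  note ps = mixed_facts(3)[OF mL] and qs = mixed_facts(3)[OF mH]
  define S where "S = {b\<in>{0..pbar}. 0 < \<sigma> L b}"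
  have fS: "finite S" by (simp add: S_def)
  have neS: "S \<noteq> {}"
  proof
    assume "S = {}"
    have "\<forall>b\<in>{0..pbar}. \<sigma> L b = 0"
    proof
      fix b assume b: "b \<in> {0..pbar}"
      then have "\<not> 0 < \<sigma> L b" using \<open>S = {}\<close> by (auto simp: S_def)
      then show "\<sigma> L b = 0" using pnn[of b] by simp
    qed
    then have "(\<Sum>x\<in>{0..pbar}. \<sigma> L x) = 0" by simp
    then show False using ps by simp
  qed
  define B where "B = Max S"
  have BS: "B \<in> S" using fS neS by (simp add: B_def)
  have Bp: "B \<le> pbar" and pB: "0 < \<sigma> L B" using BS by (auto simp: S_def)
  have ptop: "\<sigma> L b = 0" if "B < b" for b
  proof (rule ccontr)
    assume "\<sigma> L b \<noteq> 0"
    then have "0 < \<sigma> L b" using pnn[of b] by simp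
    moreover have "b \<le> pbar" using \<open>\<sigma> L b \<noteq> 0\<close> pz by (meson not_le)
    ultimately have "b \<in> S" by (simp add: S_def)
    then have "b \<le> B" using fS by (simp add: B_def)
    then show False using that by simp
  qed
  have qhigh: "\<sigma> H x = 0" if "B < x" for x
    using q_high_zero[OF ne mp ptop Bp that] by simp
  have clp: "cl \<le> pbar" using clch chp by simp
  show ?thesis
  proof (cases "cl < B")
    case True
    have pB1: "0 < \<sigma> L (B-1)"
    proof -
      have "\<sigma> L B \<le> \<sigma> L (B-1)" by (rule limL) (use True Bp vl in auto)
      then show ?thesis using pB by simp
    qed
    have B1p: "B - 1 \<le> pbar" using Bp by simp
    have e1: "bid_util WB_alpha pbar (vl, vh) L B (\<sigma> H) \<le> bid_util WB_alpha pbar (vl, vh) L (B-1) (\<sigma> H)"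
      using nash_D[OF ne pB1 B1p Bp] by simp
    have e2: "bid_util WB_alpha pbar (vl, vh) L (B-1) (\<sigma> H) \<le> bid_util WB_alpha pbar (vl, vh) L B (\<sigma> H)"
      using nash_D[OF ne pB Bp B1p] by simp
    define c where "c x = (if B \<le> x then 0 else if x = B - 1 then real vl - 2 * real B + 1 else (-1::real))" for x
    have cneg: "c x < 0" if "x < B" for x
      using that True vl by (auto simp: c_def)
    have "bid_util WB_alpha pbar (vl, vh) L B (\<sigma> H) - bid_util WB_alpha pbar (vl, vh) L (B-1) (\<sigma> H)
        = (\<Sum>x\<in>{0..pbar}. \<sigma> H x * c x)"
      unfolding bid_util_diff uL c_def by (rule sum.cong) (use True in \<open>auto simp: of_nat_diff\<close>)
    then have "(\<Sum>x\<in>{0..pbar}. - (\<sigma> H x * c x)) = 0" using e1 e2 by (simp add: sum_negf)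
    moreover have "\<forall>x\<in>{0..pbar}. 0 \<le> - (\<sigma> H x * c x)"
    proof
      fix x assume "x \<in> {0..pbar}"
      show "0 \<le> - (\<sigma> H x * c x)"
      proof (cases "x < B")
        case True then show ?thesis using cneg[OF True] qnn[of x] by (simp add: mult_nonneg_nonpos)
      next
        case False then show ?thesis by (simp add: c_def)
      qed
    qed
    ultimately have z0: "\<forall>x\<in>{0..pbar}. - (\<sigma> H x * c x) = 0"
      using sum_nonneg_eq_0_iff[of "{0..pbar}" "\<lambda>x. - (\<sigma> H x * c x)"] by blast
    then have z: "\<forall>x\<in>{0..pbar}. \<sigma> H x * c x = 0" by simp
    have qlow: "\<sigma> H x = 0" if "x < B" for x
      using z cneg[OF that] that Bp by auto
    have qo: "\<forall>e. e \<noteq> B \<longrightarrow> \<sigma> H e = 0"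
      using qlow qhigh by (metis linorder_neqE_nat)
    have "(\<Sum>x\<in>{0..pbar}. \<sigma> H x) = \<sigma> H B"
      using qo Bp by (subst sum.remove[of _ B]) auto
    then have "\<sigma> H B = 1" using qs by simp
    then show ?thesis using Bp True pB ptop qo pB1 by auto
  next
    case False
    define P where "P = (\<lambda>i. if i = L then \<sigma> L else \<sigma> H)"
    have Pe: "P = \<sigma>" unfolding P_def by (rule profile_eta)
    have PLge: "real cl \<le> payoff WB_alpha pbar (vl, vh) \<sigma> L"
      unfolding payoff_def
    proof (rule sum_ge_weight[OF ps])
      fix b assume b: "b \<le> pbar"
      show "\<sigma> L b * real cl \<le> \<sigma> L b * bid_util WB_alpha pbar (vl, vh) L b (\<sigma> (other L))"
      proof (cases "0 < \<sigma> L b")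
        case True
        have "real cl \<le> bid_util WB_alpha pbar (vl, vh) L cl (\<sigma> H)"
          unfolding bid_util_def uL by (rule sum_ge_weight[OF qs]) (use qnn vl in \<open>auto intro!: mult_left_mono\<close>)
        also have "\<dots> \<le> bid_util WB_alpha pbar (vl, vh) L b (\<sigma> H)"
          using nash_D[OF ne True b clp] by simp
        finally show ?thesis using True by simp
      next
        case False then have "\<sigma> L b = 0" using pnn[of b] by simp
        then show ?thesis by simp
      qed
    qed
    have PHge: "real vh - real B \<le> payoff WB_alpha pbar (vl, vh) \<sigma> H"
      unfolding payoff_def
    proof (rule sum_ge_weight[OF qs])
      fix x assume x: "x \<le> pbar"
      show "\<sigma> H x * (real vh - real B) \<le> \<sigma> H x * bid_util WB_alpha pbar (vl, vh) H x (\<sigma> (other H))"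
      proof (cases "0 < \<sigma> H x")
        case True
        have "real vh - real B = bid_util WB_alpha pbar (vl, vh) H B (\<sigma> L)"
          using bid_util_H_top[OF mL ptop] by simp
        also have "\<dots> \<le> bid_util WB_alpha pbar (vl, vh) H x (\<sigma> L)"
          using nash_D[OF ne True x Bp] by simp
        finally show ?thesis using True by simp
      next
        case False then have "\<sigma> H x = 0" using qnn[of x] by simp
        then show ?thesis by simp
      qed
    qed
    define W where "W = (\<Sum>b\<in>{0..pbar}. \<Sum>x\<in>{0..pbar}. \<sigma> L b * \<sigma> H x * (if x < b then 1 else 0))"
    have Wnn: "\<And>x0. x0 < B \<Longrightarrow> \<sigma> L B * \<sigma> H x0 \<le> W"
    proof -
      fix x0 assume x0: "x0 < B"
      have inner: "\<sigma> L B * \<sigma> H x0 \<le> (\<Sum>x\<in>{0..pbar}. \<sigma> L B * \<sigma> H x * (if x < B then 1 else 0))"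
        using member_le_sum[of x0 "{0..pbar}" "\<lambda>x. \<sigma> L B * \<sigma> H x * (if x < B then 1 else 0)"] x0 Bp pnn qnn
        by (auto intro: mult_nonneg_nonneg)
      also have "\<dots> \<le> W" unfolding W_def
        by (rule member_le_sum[of B "{0..pbar}"]) (use Bp pnn qnn in \<open>auto intro!: sum_nonneg mult_nonneg_nonneg\<close>)
      finally show "\<sigma> L B * \<sigma> H x0 \<le> W" .
    qed
    have W0: "0 \<le> W" unfolding W_def by (auto intro!: sum_nonneg mult_nonneg_nonneg simp: pnn qnn)
    have sumeq: "payoff WB_alpha pbar (vl, vh) \<sigma> L + payoff WB_alpha pbar (vl, vh) \<sigma> H = real vh - (real vh - real vl) * W"
      using payoff_sum[OF mL mH, of vl vh] unfolding W_def by (simp add: profile_eta)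
    have vlvh: "real vl < real vh" using vl vh clch by simp
    have clB: "cl \<le> B"
    proof -
      have "real cl + (real vh - real B) \<le> real vh - (real vh - real vl) * W" using PLge PHge sumeq by linarith
      moreover have "0 \<le> (real vh - real vl) * W" using vlvh W0 by simp
      ultimately show ?thesis by simp
    qed
    have Bcl: "B = cl" using False clB by simp
    have qlow: "\<sigma> H x0 = 0" if "x0 < B" for x0
    proof -
      have "real cl + (real vh - real B) \<le> real vh - (real vh - real vl) * W" using PLge PHge sumeq by linarith
      then have "(real vh - real vl) * W \<le> 0" using Bcl by simp
      then have "W \<le> 0" using vlvh by (simp add: mult_le_0_iff)
      then have "\<sigma> L B * \<sigma> H x0 \<le> 0" using Wnn[OF that] by simp
      then show ?thesis using pB qnn[of x0] by (simp add: mult_le_0_iff)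
    qed
    have qo: "\<forall>e. e \<noteq> B \<longrightarrow> \<sigma> H e = 0"
      using qlow qhigh by (metis linorder_neqE_nat)
    have "(\<Sum>x\<in>{0..pbar}. \<sigma> H x) = \<sigma> H B"
      using qo Bp by (subst sum.remove[of _ B]) auto
    then have "\<sigma> H B = 1" using qs by simp
    then show ?thesis using Bp clB pB ptop qo False by auto
  qed
qed

lemma EL_le:
  fixes p :: "nat \<Rightarrow> real"
  assumes m: "mixed pbar p" and top: "\<And>b. B < b \<Longrightarrow> p b = 0" and B2: "B \<le> 2*cl"
    and limL: "\<And>d b. d < b \<Longrightarrow> b \<le> pbar \<Longrightarrow> 2*cl \<le> d + b \<Longrightarrow> p b \<le> p d"
  shows "exp_bid pbar p \<le> real cl"
proof -
  note pnn = mixed_facts(1)[OF m] and pz = mixed_facts(2)[OF m] and ps = mixed_facts(3)[OF m]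
  define g where "g x = p x * (real x - real cl)" for x
  have "exp_bid pbar p - real cl = (\<Sum>x\<in>{0..pbar}. g x)"
  proof -
    have "(\<Sum>x\<in>{0..pbar}. p x * real cl) = real cl" using sum_const_weight[OF ps] .
    then show ?thesis unfolding exp_bid_def g_def by (simp add: algebra_simps sum_subtractf)
  qed
  also have "\<dots> = (\<Sum>x\<in>{0..pbar + 2*cl}. g x)"
    by (rule sum.mono_neutral_left) (auto simp: g_def pz)
  also have "\<dots> = (\<Sum>x\<in>{0..2*cl}. g x)"
    by (rule sum.mono_neutral_right) (use B2 in \<open>auto simp: g_def top\<close>)
  also have "\<dots> \<le> 0"
  proof -
    have r: "(\<Sum>x\<in>{0..2*cl-0}. g x) = (\<Sum>x\<in>{0..2*cl-0}. g (2*cl - x))"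
      by (rule sum_reflect2) simp
    have mono: "p x \<le> p (2*cl - x)" if "cl < x" "x \<le> 2*cl" for x
    proof (cases "x \<le> pbar")
      case True then show ?thesis by (rule limL[rotated]) (use that in auto)
    next
      case False then show ?thesis using pz pnn by simp
    qed
    have "(\<Sum>x\<in>{0..2*cl}. g x + g (2*cl - x)) \<le> 0"
    proof (rule sum_nonpos)
      fix x assume x: "x \<in> {0..2*cl}"
      have rx: "real (2*cl - x) = 2 * real cl - real x" using x by (auto simp: of_nat_diff)
      have gx: "g x + g (2*cl - x) = (p x - p (2*cl - x)) * (real x - real cl)"
        unfolding g_def rx by (simp add: algebra_simps)
      consider "cl < x" | "x = cl" | "x < cl" by linarith
      then show "g x + g (2*cl - x) \<le> 0"
      proof cases
        case 1 then show ?thesis unfolding gx using mono[OF 1] x by (simp add: mult_nonpos_nonneg)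
      next
        case 2 then show ?thesis unfolding gx by simp
      next
        case 3
        have "p (2*cl - x) \<le> p (2*cl - (2*cl - x))" using mono[of "2*cl - x"] 3 by simp
        also have "2*cl - (2*cl - x) = x" using 3 by simp
        finally show ?thesis unfolding gx using 3 by (simp add: mult_nonneg_nonpos)
      qed
    qed
    then show ?thesis using r by (simp add: sum.distrib)
  qed
  finally show ?thesis by simp
qed

lemma tend_exp:
  assumes "\<And>b. (\<lambda>n. s n b) \<longlonglongrightarrow> s0 b"
  shows "(\<lambda>n. exp_bid pbar (s n)) \<longlonglongrightarrow> exp_bid pbar s0"
  unfolding exp_bid_def by (intro tendsto_intros assms)

lemma tend_payoff:
  assumes "\<And>i b. (\<lambda>n. \<sigma>s n i b) \<longlonglongrightarrow> \<sigma> i b"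
  shows "(\<lambda>n. payoff a pbar v (\<sigma>s n) i) \<longlonglongrightarrow> payoff a pbar v \<sigma> i"
  unfolding payoff_def bid_util_def by (intro tendsto_intros assms)

lemma limit_values:
  fixes \<sigma> :: profile
  assumes mL: "mixed pbar (\<sigma> L)" and B: "B \<le> pbar" and top: "\<And>b. B < b \<Longrightarrow> \<sigma> L b = 0"
    and qB: "\<sigma> H B = 1" and qo: "\<And>e. e \<noteq> B \<Longrightarrow> \<sigma> H e = 0"
  shows "exp_bid pbar (\<sigma> H) = real B"
    "payoff WB_alpha pbar (vl, vh) \<sigma> L = real B"
    "payoff WB_alpha pbar (vl, vh) \<sigma> H = real vh - real B"
proof -
  have d: "(\<Sum>x\<in>{0..pbar}. \<sigma> H x * f x) = f B" for f :: "nat \<Rightarrow> real"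
  proof -
    have "(\<Sum>x\<in>{0..pbar}. \<sigma> H x * f x) = (\<Sum>x\<in>{0..pbar}. if x = B then f B else 0)"
      by (rule sum.cong) (auto simp: qB qo)
    then show ?thesis using B by simp
  qed
  show "exp_bid pbar (\<sigma> H) = real B" unfolding exp_bid_def by (rule d)
  have bl: "bid_util WB_alpha pbar (vl, vh) L b (\<sigma> H) = (if b \<le> B then real B else real vl - real b)" for b
    unfolding bid_util_def uL by (subst d) simp
  have "payoff WB_alpha pbar (vl, vh) \<sigma> L = (\<Sum>b\<in>{0..pbar}. \<sigma> L b * real B)"
    unfolding payoff_def by (rule sum.cong) (auto simp: top bl)
  then show "payoff WB_alpha pbar (vl, vh) \<sigma> L = real B"
    using sum_const_weight mixed_facts(3)[OF mL] by simp
  have "payoff WB_alpha pbar (vl, vh) \<sigma> H = bid_util WB_alpha pbar (vl, vh) H B (\<sigma> L)"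
    unfolding payoff_def using d by simp
  then show "payoff WB_alpha pbar (vl, vh) \<sigma> H = real vh - real B"
    using bid_util_H_top[OF mL top] by simp
qed

lemma EL_lt_B:
  fixes p :: "nat \<Rightarrow> real"
  assumes m: "mixed pbar p" and top: "\<And>b. B < b \<Longrightarrow> p b = 0" and B: "1 \<le> B" "B \<le> pbar" and pB1: "0 < p (B-1)"
  shows "exp_bid pbar p < real B"
proof -
  note pnn = mixed_facts(1)[OF m] and ps = mixed_facts(3)[OF m]
  have "exp_bid pbar p \<le> (\<Sum>x\<in>{0..pbar}. p x * real B - (if x = B - 1 then p (B-1) else 0))"
    unfolding exp_bid_def
  proof (rule sum_mono)
    fix x assume x: "x \<in> {0..pbar}"
    show "p x * real x \<le> p x * real B - (if x = B - 1 then p (B-1) else 0)"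
    proof (cases "x \<le> B")
      case True
      show ?thesis
      proof (cases "x = B - 1")
        case True then show ?thesis using B by (simp add: of_nat_diff algebra_simps)
      next
        case False then show ?thesis using \<open>x \<le> B\<close> pnn[of x] by (simp add: mult_left_mono)
      qed
    next
      case False then show ?thesis using top[of x] B by auto
    qed
  qed
  also have "\<dots> = real B - p (B-1)"
  proof -
    have a: "(\<Sum>x\<in>{0..pbar}. (if x = B - 1 then p (B-1) else 0)) = p (B-1)"
      using B by (subst sum.delta) auto
    show ?thesis using sum_const_weight[OF ps, of "real B"] a by (simp only: sum_subtractf)
  qed
  finally show ?thesis using pB1 by simp
qed

theorem theorem1:
  fixes vl vh vbar pbar :: nat and \<sigma> :: profile and \<sigma>s :: "nat \<Rightarrow> profile"
  assumes "even vl" and "even vh" and "vl < vh" and "vh \<le> vbar" and "vbar \<le> 2 * pbar"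
    and "nash WB_alpha pbar (vl, vh) \<sigma>"
    and "\<And>n. mixed_profile pbar (\<sigma>s n)"
    and "\<And>n. weakly_payoff_monotone WB_alpha pbar (vl, vh) (\<sigma>s n)"
    and "\<And>i b. (\<lambda>n. \<sigma>s n i b) \<longlonglongrightarrow> \<sigma> i b"
  shows "\<exists>\<Lambda>. \<forall>n\<ge>\<Lambda>.
    (let cl = real vl / 2; ch = real vh / 2; ES = ch - cl;
         t = max (2 * ch / 3 - cl) (ES / 3) + 1
     in (real vl \<ge> real vh / 3 \<longrightarrow> exp_bid pbar (\<sigma>s n L) < cl + 1)
      \<and> (cl - 1 < exp_bid pbar (\<sigma>s n H) \<and> exp_bid pbar (\<sigma>s n H) < cl + t)
      \<and> (payoff WB_alpha pbar (vl, vh) (\<sigma>s n) L < cl + t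
         \<and> payoff WB_alpha pbar (vl, vh) (\<sigma>s n) H > ch + (ES - t))
      \<and> (payoff WB_alpha pbar (vl, vh) \<sigma> L > cl \<longrightarrow>
           exp_bid pbar (\<sigma>s n L) < exp_bid pbar (\<sigma>s n H)))"
proof -
  note ev = assms(1) and evh = assms(2) and ne = assms(6) and mps = assms(7) and wpms = assms(8)
    and lim = assms(9)
  obtain cl where vl: "vl = 2*cl" using ev by (auto elim: evenE)
  obtain ch where vh: "vh = 2*ch" using evh by (auto elim: evenE)
  have clch: "cl < ch" using assms(3) vl vh by simp
  have chp: "ch \<le> pbar" using assms(4,5) vh by simp
  have mp: "mixed_profile pbar \<sigma>" using ne by (simp add: nash_def)
  have mL: "mixed pbar (\<sigma> L)" and mH: "mixed pbar (\<sigma> H)" using mp by (auto simp: mixed_profile_def)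
  have limL: "\<sigma> L b \<le> \<sigma> L d" if "d < b" "b \<le> pbar" "vl \<le> d + b" for d b
  proof (rule LIMSEQ_le[OF lim lim])
    show "\<exists>N. \<forall>n\<ge>N. \<sigma>s n L b \<le> \<sigma>s n L d"
    proof (intro exI allI impI)
      fix n :: nat
      have "\<And>x. 0 \<le> \<sigma>s n H x" using mps[of n] by (auto simp: mixed_profile_def mixed_def)
      then show "\<sigma>s n L b \<le> \<sigma>s n L d" using gen_L[OF wpms[of n] _ that(1) that(2) that(3)] by blast
    qed
  qed
  obtain B where B: "B \<le> pbar" "cl \<le> B" "0 < \<sigma> L B" "\<forall>b>B. \<sigma> L b = 0" "\<sigma> H B = 1"
      "\<forall>e. e \<noteq> B \<longrightarrow> \<sigma> H e = 0" "cl < B \<longrightarrow> 0 < \<sigma> L (B-1)"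
    using limit_structure[OF vl vh clch chp ne limL] by blast
  have vals: "exp_bid pbar (\<sigma> H) = real B" "payoff WB_alpha pbar (vl, vh) \<sigma> L = real B"
      "payoff WB_alpha pbar (vl, vh) \<sigma> H = real vh - real B"
    using limit_values[OF mL B(1) _ B(5)] B(4,6) by auto
  define t0 where "t0 = max (2 * real ch / 3 - real cl) ((real ch - real cl) / 3) + 1"
  have bound: "real B < real cl + t0"
  proof (cases "cl < B")
    case False
    then have "B = cl" using B(2) by simp
    moreover have "0 < t0"
    proof -
      have "real cl < real ch" using clch by simp
      then have "0 < (real ch - real cl) / 3" by simp
      then have "0 < (real ch - real cl) / 3 + 1" by linarith
      then show ?thesis unfolding t0_def by linarith
    qed
    ultimately show ?thesis by simp
  next
    case True
    have t1: "(\<lambda>n. \<sigma>s n H B - \<sigma>s n H (B-1)) \<longlonglongrightarrow> \<sigma> H B - \<sigma> H (B-1)"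
      by (intro tendsto_intros lim)
    have "\<sigma> H B - \<sigma> H (B-1) = 1" using B(5,6) True by simp
    then have "0 < \<sigma> H B - \<sigma> H (B-1)" by simp
    from order_tendstoD(1)[OF t1 this]
    have e1: "eventually (\<lambda>n. 0 < \<sigma>s n H B - \<sigma>s n H (B-1)) sequentially" .
    have e2: "eventually (\<lambda>n. 0 < \<sigma>s n L B) sequentially"
      using order_tendstoD(1)[OF lim B(3)] .
    obtain N where N: "\<forall>n\<ge>N. 0 < \<sigma>s n H B - \<sigma>s n H (B-1) \<and> 0 < \<sigma>s n L B"
      using eventually_conj[OF e1 e2] unfolding eventually_sequentially by blast
    have "\<sigma>s N H (B-1) < \<sigma>s N H B" "0 < \<sigma>s N L B" using N by auto
    from spl[OF vl vh mps wpms True B(1) this] show ?thesis unfolding t0_def by simp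
  qed
  have rc: "real vl / 2 = real cl" "real vh / 2 = real ch" using vl vh by auto
  have limL': "\<sigma> L b \<le> \<sigma> L d" if "d < b" "b \<le> pbar" "2*cl \<le> d + b" for d b
    using limL that vl by simp
  have l1: "exp_bid pbar (\<sigma> L) < real cl + 1" if c: "real vh / 3 \<le> real vl"
  proof -
    have c3: "real ch \<le> 3 * real cl" using c rc by simp
    have "t0 \<le> real cl + 1" unfolding t0_def using c3 by (simp add: max_def field_simps)
    then have "real B < 2 * real cl + 1" using bound by simp
    then have "B \<le> 2*cl" by linarith
    from EL_le[OF mL _ this limL'] B(4) show ?thesis by simp
  qed
  have l4: "exp_bid pbar (\<sigma> L) < real B" if c: "real cl < payoff WB_alpha pbar (vl, vh) \<sigma> L"
  proof -
    have "cl < B" using c vals(2) by simp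
    then show ?thesis using EL_lt_B[OF mL _ _ B(1)] B(4,7) by simp
  qed
  have tEL: "(\<lambda>n. exp_bid pbar (\<sigma>s n L)) \<longlonglongrightarrow> exp_bid pbar (\<sigma> L)" by (rule tend_exp) (rule lim)
  have tEH: "(\<lambda>n. exp_bid pbar (\<sigma>s n H)) \<longlonglongrightarrow> real B"
  proof -
    have "(\<lambda>n. exp_bid pbar (\<sigma>s n H)) \<longlonglongrightarrow> exp_bid pbar (\<sigma> H)" by (rule tend_exp) (rule lim)
    then show ?thesis using vals(1) by simp
  qed
  have tPL: "(\<lambda>n. payoff WB_alpha pbar (vl, vh) (\<sigma>s n) L) \<longlonglongrightarrow> real B"
  proof -
    have "(\<lambda>n. payoff WB_alpha pbar (vl, vh) (\<sigma>s n) L) \<longlonglongrightarrow> payoff WB_alpha pbar (vl, vh) \<sigma> L"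
      by (rule tend_payoff) (rule lim)
    then show ?thesis using vals(2) by simp
  qed
  have tPH: "(\<lambda>n. payoff WB_alpha pbar (vl, vh) (\<sigma>s n) H) \<longlonglongrightarrow> real vh - real B"
  proof -
    have "(\<lambda>n. payoff WB_alpha pbar (vl, vh) (\<sigma>s n) H) \<longlonglongrightarrow> payoff WB_alpha pbar (vl, vh) \<sigma> H"
      by (rule tend_payoff) (rule lim)
    then show ?thesis using vals(3) by simp
  qed
  have ev1: "eventually (\<lambda>n. real vh / 3 \<le> real vl \<longrightarrow> exp_bid pbar (\<sigma>s n L) < real cl + 1) sequentially"
  proof (cases "real vh / 3 \<le> real vl")
    case True
    from order_tendstoD(2)[OF tEL l1[OF True]] show ?thesis by (rule eventually_mono) simp
  next
    case False then show ?thesis by simp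
  qed
  have ev2: "eventually (\<lambda>n. real cl - 1 < exp_bid pbar (\<sigma>s n H)) sequentially"
    by (rule order_tendstoD(1)[OF tEH]) (use B(2) in simp)
  have ev3: "eventually (\<lambda>n. exp_bid pbar (\<sigma>s n H) < real cl + t0) sequentially"
    by (rule order_tendstoD(2)[OF tEH bound])
  have ev4: "eventually (\<lambda>n. payoff WB_alpha pbar (vl, vh) (\<sigma>s n) L < real cl + t0) sequentially"
    by (rule order_tendstoD(2)[OF tPL bound])
  have ev5: "eventually (\<lambda>n. real ch + ((real ch - real cl) - t0) < payoff WB_alpha pbar (vl, vh) (\<sigma>s n) H) sequentially"
    by (rule order_tendstoD(1)[OF tPH]) (use bound vh in simp)
  have ev6: "eventually (\<lambda>n. real cl < payoff WB_alpha pbar (vl, vh) \<sigma> L \<longrightarrow> exp_bid pbar (\<sigma>s n L) < exp_bid pbar (\<sigma>s n H)) sequentially"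
  proof (cases "real cl < payoff WB_alpha pbar (vl, vh) \<sigma> L")
    case True
    have t: "(\<lambda>n. exp_bid pbar (\<sigma>s n H) - exp_bid pbar (\<sigma>s n L)) \<longlonglongrightarrow> real B - exp_bid pbar (\<sigma> L)"
      by (intro tendsto_intros tEH tEL)
    have "0 < real B - exp_bid pbar (\<sigma> L)" using l4[OF True] by simp
    from order_tendstoD(1)[OF t this] show ?thesis by (rule eventually_mono) simp
  next
    case False then show ?thesis by simp
  qed
  obtain N where N: "\<forall>n\<ge>N. (real vh / 3 \<le> real vl \<longrightarrow> exp_bid pbar (\<sigma>s n L) < real cl + 1)
      \<and> real cl - 1 < exp_bid pbar (\<sigma>s n H) \<and> exp_bid pbar (\<sigma>s n H) < real cl + t0
      \<and> payoff WB_alpha pbar (vl, vh) (\<sigma>s n) L < real cl + t0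
      \<and> real ch + ((real ch - real cl) - t0) < payoff WB_alpha pbar (vl, vh) (\<sigma>s n) H
      \<and> (real cl < payoff WB_alpha pbar (vl, vh) \<sigma> L \<longrightarrow> exp_bid pbar (\<sigma>s n L) < exp_bid pbar (\<sigma>s n H))"
    using eventually_conj[OF ev1 eventually_conj[OF ev2 eventually_conj[OF ev3 eventually_conj[OF ev4 eventually_conj[OF ev5 ev6]]]]]
    unfolding eventually_sequentially by blast
  show ?thesis
    by (rule exI[of _ N]) (use N in \<open>simp add: Let_def rc t0_def\<close>)
qed

end
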